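(* Let $K$ be an idempotent, linearly ordered, archimedian, commutative semiring. A series $S\in K[[X]]$ is rational if and only if it is a merge of finitely many ultimately geometric series. Equivalently, $S$ is rational if and only if there exist integers $\kappa\geq0$, $c\geq1$, a polynomial $P\in K[X]$ of degree less than $\kappa c$, and elements $u_0,\dots,u_{c-1},q_0,\dots,q_{c-1}\in K$ such that $$S=P\oplus X^{\kappa c}\Big(\bigoplus_{0\leq i\leq c-1}u_iX^i(q_iX^c)^*\Big).$$
   Context: $K$ is idempotent if $u\oplus u=u$; linearly ordered if $u\leq v\iff u\oplus v=v$ is a total order; archimedian if for all $u,v,\lambda,\mu\in K$, ($u\lambda^k\geq v\mu^k$ for all $k\geq0$) implies $v=\mathbb{0}$ or $\lambda\geq\mu$; commutative if $uv=vu$. $K[[X]]$ is the semiring of formal power series with coefficientwise sum and Cauchy product; $\langle S,X^k\rangle$ denotes the $k$-th coefficient of $S$; $U^*=\bigoplus_{k\ge0}U^k$ for $U$ with zero constant coefficient. Rational series: smallest subset of $K[[X]]$ containing $K[X]$ and closed under sum, product and star. A series $S$ is ultimately geometric if there exist an integer $\kappa$ and $\gamma\in K$ with $\langle S,X^{k+1}\rangle=\gamma\langle S,X^k\rangle$ for all $k\geq\kappa$. The merge of $c\ge1$ series $S^{(0)},\dots,S^{(c-1)}$ is the series $S^{(0)}(X^c)\oplus XS^{(1)}(X^c)\oplus\cdots\oplus X^{c-1}S^{(c-1)}(X^c)$ (its coefficient of $X^{kc+j}$ is $\langle S^{(j)},X^k\rangle$). *)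

theory Defs
  imports "HOL-Computational_Algebra.Polynomial_FPS"
begin

definition nat_le :: "'a::comm_semiring_1 \<Rightarrow> 'a \<Rightarrow> bool" where
  "nat_le u v \<longleftrightarrow> u + v = v"

definition idempotent_sr :: "'a::comm_semiring_1 itself \<Rightarrow> bool" where
  "idempotent_sr _ \<longleftrightarrow> (\<forall>u::'a. u + u = u)"

definition linearly_ordered_sr :: "'a::comm_semiring_1 itself \<Rightarrow> bool" where
  "linearly_ordered_sr _ \<longleftrightarrow> (\<forall>u v::'a. nat_le u v \<or> nat_le v u)"

definition archimedian_sr :: "'a::comm_semiring_1 itself \<Rightarrow> bool" where
  "archimedian_sr _ \<longleftrightarrow> (\<forall>u v lam mu :: 'a.
      (\<forall>k::nat. nat_le (v * mu ^ k) (u * lam ^ k)) \<longrightarrow> v = 0 \<or> nat_le mu lam)"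

text \<open>Kleene star of a series with zero constant coefficient:
  U^* = sum over k of U^k; the coefficient of X^n only receives contributions from k \<le> n.\<close>

definition fps_star :: "'a::comm_semiring_1 fps \<Rightarrow> 'a fps" where
  "fps_star U = Abs_fps (\<lambda>n. \<Sum>k\<le>n. fps_nth (U ^ k) n)"

inductive rational_fps :: "'a::comm_semiring_1 fps \<Rightarrow> bool" where
  poly: "rational_fps (fps_of_poly p)"
| plus: "rational_fps S \<Longrightarrow> rational_fps T \<Longrightarrow> rational_fps (S + T)"
| times: "rational_fps S \<Longrightarrow> rational_fps T \<Longrightarrow> rational_fps (S * T)"
| star: "rational_fps U \<Longrightarrow> fps_nth U 0 = 0 \<Longrightarrow> rational_fps (fps_star U)"

definition ultimately_geometric :: "'a::comm_semiring_1 fps \<Rightarrow> bool" where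
  "ultimately_geometric S \<longleftrightarrow>
     (\<exists>(\<kappa>::nat) \<gamma>. \<forall>k\<ge>\<kappa>. fps_nth S (k + 1) = \<gamma> * fps_nth S k)"

definition merge_fps :: "nat \<Rightarrow> (nat \<Rightarrow> 'a::comm_semiring_1 fps) \<Rightarrow> 'a fps" where
  "merge_fps c F = Abs_fps (\<lambda>n. fps_nth (F (n mod c)) (n div c))"

end

theory Submission
  imports Defs
begin

unbundle fps_syntax


lemma fps_mult_low:
  fixes A B C :: "'b::comm_semiring_1 fps"
  assumes "\<And>j. j \<le> n \<Longrightarrow> A $ j = B $ j"
  shows "(C * A) $ n = (C * B) $ n"
  unfolding fps_mult_nth by (rule sum.cong) (auto simp: assms)

lemma fps_unique:
  fixes U A Y1 Y2 :: "'b::comm_semiring_1 fps"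
  assumes U0: "U $ 0 = 0" and h1: "Y1 = A + U * Y1" and h2: "Y2 = A + U * Y2"
  shows "Y1 = Y2"
proof (rule fps_ext)
  fix n show "Y1 $ n = Y2 $ n"
  proof (induction n rule: less_induct)
    case (less n)
    have "(U * Y1) $ n = (U * Y2) $ n"
      unfolding fps_mult_nth
    proof (rule sum.cong[OF refl])
      fix i assume "i \<in> {0..n}"
      show "U $ i * Y1 $ (n - i) = U $ i * Y2 $ (n - i)"
      proof (cases "i = 0")
        case False
        with \<open>i \<in> {0..n}\<close> have "n - i < n" by auto
        then show ?thesis using less.IH by simp
      qed (simp add: U0)
    qed
    then show ?case by (subst h1, subst h2) simp
  qed
qed

definition tsum :: "'b::comm_semiring_1 fps \<Rightarrow> nat \<Rightarrow> 'b fps" where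
  "tsum U N = (\<Sum>k\<le>N. U ^ k)"

lemma tsum_Suc: "tsum U (Suc N) = 1 + U * tsum U N"
  unfolding tsum_def by (subst sum.atMost_Suc_shift) (simp add: sum_distrib_left)

lemma star_tsum:
  assumes U0: "U $ 0 = 0" and "n \<le> N"
  shows "fps_star U $ n = tsum U N $ n"
proof -
  have "tsum U N $ n = (\<Sum>k\<le>N. (U ^ k) $ n)" unfolding tsum_def fps_sum_nth ..
  also have "\<dots> = (\<Sum>k\<le>n. (U ^ k) $ n)"
    by (rule sum.mono_neutral_right) (use assms startsby_zero_power_prefix[OF U0] in auto)
  finally show ?thesis unfolding fps_star_def by simp
qed

lemma star_fix:
  assumes U0: "U $ 0 = 0"
  shows "fps_star U = 1 + U * fps_star U"
proof (rule fps_ext)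
  fix n
  have "(U * fps_star U) $ n = (U * tsum U n) $ n"
    by (rule fps_mult_low) (simp add: star_tsum[OF U0])
  then have "(1 + U * fps_star U) $ n = tsum U (Suc n) $ n"
    by (simp add: tsum_Suc)
  then show "fps_star U $ n = (1 + U * fps_star U) $ n"
    using star_tsum[OF U0, of n "Suc n"] by simp
qed

lemma star_unique:
  assumes U0: "U $ 0 = 0" and "Y = 1 + U * Y"
  shows "Y = fps_star U"
  using fps_unique[OF U0 assms(2) star_fix[OF U0]] .


abbreviation G :: "'b::comm_semiring_1 \<Rightarrow> nat \<Rightarrow> 'b fps" where
  "G q c \<equiv> fps_star (fps_const q * fps_X ^ c)"

lemma W0: "c \<ge> 1 \<Longrightarrow> (fps_const q * fps_X ^ c) $ 0 = 0"
  by simp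

inductive BB :: "'b::comm_semiring_1 fps \<Rightarrow> bool" where
  B0: "BB 0"
| Bgen: "c \<ge> 1 \<Longrightarrow> BB (fps_const u * fps_X ^ m * G q c)"
| Badd: "BB S \<Longrightarrow> BB T \<Longrightarrow> BB (S + T)"

lemma B_sum: "finite I \<Longrightarrow> (\<And>i. i \<in> I \<Longrightarrow> BB (f i)) \<Longrightarrow> BB (\<Sum>i\<in>I. f i)"
  by (induction I rule: finite_induct) (auto intro: B0 Badd)

lemma B_monom_mult: "BB S \<Longrightarrow> BB (fps_const w * fps_X ^ k * S)"
proof (induction S rule: BB.induct)
  case B0 then show ?case by (simp add: BB.B0)
next
  case (Bgen c u m q)
  have "fps_const w * fps_X ^ k * (fps_const u * fps_X ^ m * G q c)
      = fps_const (w * u) * fps_X ^ (k + m) * G q c"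
    by (simp add: power_add algebra_simps flip: fps_const_mult)
  then show ?case using Bgen by (simp add: BB.Bgen)
next
  case (Badd S T) then show ?case by (simp add: distrib_left BB.Badd)
qed

lemma star_zero: "fps_star (0::'b::comm_semiring_1 fps) = 1"
  by (rule star_unique[symmetric]) simp_all

lemma G01: "G (0::'b::comm_semiring_1) 1 = 1"
  by (simp add: star_zero)

lemma B_G: "c \<ge> 1 \<Longrightarrow> BB (G q c)"
  using Bgen[of c 1 0 q] by simp

lemma B_monom: "BB (fps_const u * fps_X ^ m)"
  using Bgen[of 1 u m 0] by (simp add: star_zero)

lemma B_one: "BB 1"
  using B_monom[of 1 0] by simp

lemma B_poly: "BB (fps_of_poly p)"
proof (induction p rule: pCons_induct)
  case 0 then show ?case by (simp add: B0)
next
  case (pCons a p)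
  have eq: "fps_of_poly (pCons a p) = fps_const a * fps_X ^ 0 + fps_const 1 * fps_X ^ 1 * fps_of_poly p"
    by (simp add: fps_of_poly_pCons mult.commute)
  show ?case unfolding eq by (rule Badd[OF B_monom B_monom_mult[OF pCons(2)]])
qed

lemma B_polysum_mult: assumes "BB S" shows "BB ((\<Sum>i<(n::nat). fps_const (a i) * fps_X ^ (e i)) * S)"
proof -
  have "\<And>i. BB (fps_const (a i) * fps_X ^ (e i) * S)" using B_monom_mult[OF assms] .
  then show ?thesis unfolding sum_distrib_right by (intro B_sum) auto
qed

lemma star_split:
  fixes W :: "'b::comm_semiring_1 fps"
  assumes W0: "W $ 0 = 0" and d: "d \<ge> 1"
  shows "fps_star W = (\<Sum>i<d. W ^ i) * fps_star (W ^ d)"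
proof -
  obtain d' where dd: "d = Suc d'" using d by (cases d) auto
  define SD where "SD = fps_star (W ^ d)"
  have Wd0: "(W ^ d) $ 0 = 0" using W0 d by (simp add: startsby_zero_power)
  have sd: "SD = 1 + W ^ d * SD" unfolding SD_def by (rule star_fix[OF Wd0])
  have p1: "(\<Sum>i<d. W ^ i) = 1 + W * (\<Sum>i<d'. W ^ i)"
    unfolding dd by (subst sum.lessThan_Suc_shift) (simp add: sum_distrib_left)
  have p2: "W * (\<Sum>i<d. W ^ i) = W * (\<Sum>i<d'. W ^ i) + W ^ d"
    unfolding dd by (simp add: distrib_left)
  have "(\<Sum>i<d. W ^ i) * SD = 1 + W * ((\<Sum>i<d. W ^ i) * SD)"
  proof -
    have "(\<Sum>i<d. W ^ i) * SD = SD + W * (\<Sum>i<d'. W ^ i) * SD"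
      by (simp add: p1 algebra_simps)
    also have "\<dots> = 1 + W ^ d * SD + W * (\<Sum>i<d'. W ^ i) * SD"
      by (subst sd) simp
    also have "\<dots> = 1 + (W * (\<Sum>i<d'. W ^ i) + W ^ d) * SD"
      by (simp add: algebra_simps)
    also have "\<dots> = 1 + W * ((\<Sum>i<d. W ^ i) * SD)"
      by (simp add: p2 mult.assoc[symmetric])
    finally show ?thesis .
  qed
  then show ?thesis unfolding SD_def by (rule star_unique[OF W0, symmetric])
qed

context
  fixes ty :: "'a::comm_semiring_1 itself"
  assumes idem: "idempotent_sr ty"
begin

lemma add_idem: "(u::'a) + u = u"
  using idem unfolding idempotent_sr_def by blast

lemma fps_add_idem: "(f::'a fps) + f = f"
  by (rule fps_ext) (simp add: add_idem)

lemma star_add: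
  fixes A B :: "'a fps"
  assumes A0: "A $ 0 = 0" and B0: "B $ 0 = 0"
  shows "fps_star (A + B) = fps_star A * fps_star B"
proof -
  define SA where "SA = fps_star A"
  define SB where "SB = fps_star B"
  have a: "SA = 1 + A * SA" unfolding SA_def by (rule star_fix[OF A0])
  have b: "SB = 1 + B * SB" unfolding SB_def by (rule star_fix[OF B0])
  define X where "X = A * SA * (B * SB)"
  have "SA * SB = (1 + A * SA) * (1 + B * SB)" using a b by metis
  also have "\<dots> = 1 + A * SA + B * SB + X" unfolding X_def by (simp add: algebra_simps)
  finally have l: "SA * SB = 1 + A * SA + B * SB + X" .
  have r1: "A * SA * SB = A * SA + X"
  proof -
    have "A * SA * SB = A * SA * (1 + B * SB)" by (simp only: b[symmetric])
    also have "\<dots> = A * SA + X" unfolding X_def by (simp add: algebra_simps)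
    finally show ?thesis .
  qed
  have r2: "B * SA * SB = B * SB + X"
  proof -
    have "B * SA * SB = B * SB * (1 + A * SA)" by (simp only: a[symmetric]) (simp add: ac_simps)
    also have "\<dots> = B * SB + X" unfolding X_def by (simp add: algebra_simps)
    finally show ?thesis .
  qed
  have "1 + (A + B) * (SA * SB) = 1 + A * SA * SB + B * SA * SB"
    by (simp add: algebra_simps)
  also have "\<dots> = 1 + (A * SA + X) + (B * SB + X)" by (simp only: r1 r2)
  also have "\<dots> = 1 + A * SA + B * SB + (X + X)" by (simp add: algebra_simps)
  also have "\<dots> = SA * SB" by (simp add: l fps_add_idem)
  finally have "SA * SB = 1 + (A + B) * (SA * SB)" by simp
  moreover have "(A + B) $ 0 = 0" using A0 B0 by simp
  ultimately show ?thesis unfolding SA_def SB_def using star_unique by metis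
qed

lemma GG_idem: "c \<ge> 1 \<Longrightarrow> G (q::'a) c * G q c = G q c"
  using star_add[OF W0[of c q] W0[of c q]] by (simp add: fps_add_idem)


lemma W_pow: "(fps_const (q::'a) * fps_X ^ c) ^ i = fps_const (q ^ i) * fps_X ^ (c * i)"
  by (subst power_mult_distrib, subst fps_const_power, subst power_mult, rule refl)

lemma G_split:
  assumes "c \<ge> 1" "d \<ge> 1"
  shows "G (q::'a) c = (\<Sum>i<d. fps_const (q ^ i) * fps_X ^ (c * i)) * G (q ^ d) (c * d)"
  using star_split[OF W0[OF assms(1)] assms(2), of q] by (simp add: W_pow)

lemma GG: assumes c: "c \<ge> 1" and d: "d \<ge> 1" shows "BB (G (q::'a) c * G p d)"
proof -
  have cd: "c * d \<ge> 1" using c d by simp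
  have "G q d' = G q d'" for d' ..
  have e1: "G q c = (\<Sum>i<d. fps_const (q ^ i) * fps_X ^ (c * i)) * G (q ^ d) (c * d)"
    by (rule G_split[OF c d])
  have e2: "G p d = (\<Sum>i<c. fps_const (p ^ i) * fps_X ^ (d * i)) * G (p ^ c) (c * d)"
    using G_split[OF d c, of p] by (simp add: mult.commute)
  have e3: "G (q ^ d) (c * d) * G (p ^ c) (c * d) = G (q ^ d + p ^ c) (c * d)"
  proof -
    have "fps_const (q ^ d) * fps_X ^ (c * d) + fps_const (p ^ c) * fps_X ^ (c * d)
        = fps_const (q ^ d + p ^ c) * fps_X ^ (c * d)"
      by (metis distrib_right fps_const_add)
    then show ?thesis using star_add[OF W0[OF cd, of "q ^ d"] W0[OF cd, of "p ^ c"]] by simp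
  qed
  have "G q c * G p d = (\<Sum>i<d. fps_const (q ^ i) * fps_X ^ (c * i)) *
      ((\<Sum>i<c. fps_const (p ^ i) * fps_X ^ (d * i)) * G (q ^ d + p ^ c) (c * d))"
  proof -
    have "G q c * G p d = (\<Sum>i<d. fps_const (q ^ i) * fps_X ^ (c * i)) *
      ((\<Sum>i<c. fps_const (p ^ i) * fps_X ^ (d * i)) * (G (q ^ d) (c * d) * G (p ^ c) (c * d)))"
      unfolding e1 e2 by (simp only: ac_simps)
    then show ?thesis by (simp only: e3)
  qed
  then show ?thesis
    by (simp only:) (intro B_polysum_mult B_G cd)
qed

lemma B_mult: "BB S \<Longrightarrow> BB T \<Longrightarrow> BB ((S::'a fps) * T)"
proof (induction S rule: BB.induct)
  case B0 then show ?case by (simp add: BB.B0)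
next
  case (Badd S1 S2) then show ?case by (simp add: distrib_right BB.Badd)
next
  case (Bgen c u m q)
  from Bgen(2) show ?case
  proof (induction T rule: BB.induct)
    case B0 then show ?case by (simp add: BB.B0)
  next
    case (Badd T1 T2) then show ?case by (simp add: distrib_left BB.Badd)
  next
    case (Bgen d v n p)
    have "fps_const u * fps_X ^ m * G q c * (fps_const v * fps_X ^ n * G p d)
       = fps_const (u * v) * fps_X ^ (m + n) * (G q c * G p d)"
      by (simp add: power_add ac_simps flip: fps_const_mult)
    then show ?case using B_monom_mult[OF GG[OF \<open>c \<ge> 1\<close> \<open>d \<ge> 1\<close>]] by simp
  qed
qed

lemma B_decomp: "BB T \<Longrightarrow> \<exists>a T'. BB T' \<and> T = fps_const a + fps_X * (T'::'a fps)"
proof (induction T rule: BB.induct)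
  case B0 then show ?case by (intro exI[of _ 0] exI[of _ 0]) (simp add: BB.B0)
next
  case (Badd S T)
  then obtain a1 S' a2 T' where "BB S'" "S = fps_const a1 + fps_X * S'" "BB T'" "T = fps_const a2 + fps_X * T'"
    by blast
  then show ?case
    by (intro exI[of _ "a1 + a2"] exI[of _ "S' + T'"]) (auto simp: BB.Badd algebra_simps fps_const_add[symmetric] simp del: fps_const_add)
next
  case (Bgen c u m q)
  show ?case
  proof (cases m)
    case 0
    obtain c' where c': "c = Suc c'" using Bgen by (cases c) auto
    have "G q c = 1 + fps_const q * fps_X ^ c * G q c"
      by (rule star_fix[OF W0[OF Bgen]])
    note e = this
    have "fps_const u * fps_X ^ m * G q c = fps_const u * (1 + fps_const q * fps_X ^ c * G q c)"
      by (simp only: 0 power_0 mult_1_right, subst e, rule refl)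
    also have "\<dots> = fps_const u + fps_X * (fps_const (u * q) * fps_X ^ c' * G q c)"
      using c' by (simp add: algebra_simps flip: fps_const_mult)
    finally have "fps_const u * fps_X ^ m * G q c = fps_const u + fps_X * (fps_const (u * q) * fps_X ^ c' * G q c)" .
    then show ?thesis using BB.Bgen[OF Bgen, of "u * q" c' q] by (intro exI[of _ u] exI[of _ "fps_const (u * q) * fps_X ^ c' * G q c"] conjI)
  next
    case (Suc m')
    have "fps_const u * fps_X ^ m * G q c = fps_const 0 + fps_X * (fps_const u * fps_X ^ m' * G q c)"
      using Suc by (simp add: ac_simps)
    then show ?thesis using BB.Bgen[OF Bgen, of u m' q] by (intro exI[of _ 0] exI[of _ "fps_const u * fps_X ^ m' * G q c"] conjI)
  qed
qed

lemma B_star_gen: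
  assumes c: "c \<ge> 1"
  shows "BB (fps_star (fps_X * (fps_const u * fps_X ^ m * G (q::'a) c)))"
proof -
  define W where "W = fps_const u * fps_X ^ Suc m"
  define T where "T = W * G q c"
  have W0': "W $ 0 = 0" unfolding W_def by simp
  have TT: "fps_X * (fps_const u * fps_X ^ m * G q c) = T" unfolding T_def W_def by (simp add: ac_simps)
  define SW where "SW = fps_star W"
  have sw: "SW = 1 + W * SW" unfolding SW_def by (rule star_fix[OF W0'])
  have gg: "G q c * G q c = G q c" by (rule GG_idem[OF c])
  have T0: "T $ 0 = 0" unfolding T_def using W0' by simp
  define Y where "Y = 1 + T * SW"
  have "1 + T * Y = 1 + W * G q c + W * W * (G q c * G q c) * SW"
    unfolding Y_def T_def by (simp add: algebra_simps)
  also have "\<dots> = 1 + W * G q c + W * W * G q c * SW" by (simp add: gg)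
  also have "\<dots> = 1 + W * G q c * (1 + W * SW)" by (simp add: algebra_simps)
  also have "\<dots> = Y" unfolding Y_def T_def by (simp only: sw[symmetric])
  finally have "Y = fps_star T" using star_unique[OF T0] by metis
  moreover have "BB Y"
  proof -
    have "BB T" unfolding T_def W_def by (rule BB.Bgen[OF c])
    moreover have "BB SW" unfolding SW_def W_def by (rule B_G) simp
    ultimately show ?thesis unfolding Y_def by (intro BB.Badd B_one B_mult)
  qed
  ultimately show ?thesis by (simp add: TT)
qed

lemma B_star: "BB T \<Longrightarrow> BB (fps_star (fps_X * (T::'a fps)))"
proof (induction T rule: BB.induct)
  case B0 then show ?case by (simp add: star_zero B_one)
next
  case (Bgen c u m q) then show ?case by (rule B_star_gen)
next
  case (Badd S T)
  have "fps_star (fps_X * (S + T)) = fps_star (fps_X * S) * fps_star (fps_X * T)"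
    unfolding distrib_left by (rule star_add) simp_all
  then show ?case using Badd by (simp add: B_mult)
qed

lemma rat_B: "rational_fps S \<Longrightarrow> BB (S::'a fps)"
proof (induction S rule: rational_fps.induct)
  case (poly p) then show ?case by (rule B_poly)
next
  case (plus S T) then show ?case by (simp add: BB.Badd)
next
  case (times S T) then show ?case by (simp add: B_mult)
next
  case (star U)
  obtain a T' where "BB T'" and U: "U = fps_const a + fps_X * T'" using B_decomp[OF star(3)] by blast
  have "a = 0" using star(2) U by simp
  with U have "U = fps_X * T'" by simp
  then show ?case using B_star[OF \<open>BB T'\<close>] by simp
qed

end



definition ug :: "(nat \<Rightarrow> 'b::comm_semiring_1) \<Rightarrow> bool" where
  "ug x \<longleftrightarrow> (\<exists>K \<gamma>. \<forall>k\<ge>K. x (Suc k) = \<gamma> * x k)"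

definition Pc :: "nat \<Rightarrow> 'b::comm_semiring_1 fps \<Rightarrow> bool" where
  "Pc c S \<longleftrightarrow> (\<forall>r<c. ug (\<lambda>k. S $ (r + k * c)))"

lemma ug_pow:
  fixes x :: "nat \<Rightarrow> 'b::comm_semiring_1"
  assumes "\<forall>k\<ge>K. x (Suc k) = \<gamma> * x k" "i \<ge> K"
  shows "x (i + m) = \<gamma> ^ m * x i"
  by (induction m) (use assms in \<open>auto simp: mult.assoc\<close>)

lemma ug_sub: assumes "ug x" shows "ug (\<lambda>k. x (j + k * d))"
proof -
  obtain K \<gamma> where h: "\<forall>k\<ge>K. x (Suc k) = \<gamma> * x k" using assms unfolding ug_def by blast
  have "\<forall>k\<ge>K. x (j + Suc k * d) = \<gamma> ^ d * x (j + k * d)"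
  proof (intro allI impI)
    fix k assume k: "k \<ge> K"
    show "x (j + Suc k * d) = \<gamma> ^ d * x (j + k * d)"
    proof (cases "d = 0")
      case False
      then have "k \<le> k * d" by simp
      then have "j + k * d \<ge> K" using k by linarith
      then show ?thesis using ug_pow[OF h, of "j + k * d" d] by (simp add: algebra_simps)
    qed simp
  qed
  then show ?thesis unfolding ug_def by blast
qed

lemma Pc_mult: assumes "Pc c S" "c \<ge> 1" shows "Pc (c * d) S"
  unfolding Pc_def
proof (intro allI impI)
  fix r assume r: "r < c * d"
  have rm: "r mod c < c" using assms(2) by simp
  have u: "ug (\<lambda>k. S $ (r mod c + k * c))" using assms(1) rm unfolding Pc_def by blast
  have "ug (\<lambda>k. S $ (r mod c + (r div c + k * d) * c))" using ug_sub[OF u, of "r div c" d] by simp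
  moreover have "\<And>k. r mod c + (r div c + k * d) * c = r + k * (c * d)"
    by (simp add: algebra_simps)
  ultimately show "ug (\<lambda>k. S $ (r + k * (c * d)))" by simp
qed

lemma shift_Pc:
  assumes c: "c \<ge> 1" and h: "\<forall>n\<ge>N. S $ (n + c) = \<gamma> * S $ n"
  shows "Pc c S"
  unfolding Pc_def ug_def
proof (intro allI impI exI)
  fix r k assume "k \<ge> N"
  moreover have "k \<le> k * c" using c by simp
  ultimately have "r + k * c \<ge> N" by linarith
  then have e: "S $ ((r + k * c) + c) = \<gamma> * S $ (r + k * c)" using h by blast
  have eq: "r + Suc k * c = (r + k * c) + c" by simp
  show "S $ (r + Suc k * c) = \<gamma> * S $ (r + k * c)" unfolding eq by (rule e)
qed

lemma G_shift: assumes c: "c \<ge> 1" shows "G q c $ (j + c) = q * G q c $ j"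
proof -
  have "G q c $ (j + c) = (1 + fps_const q * (fps_X ^ c * G q c)) $ (j + c)"
    by (subst star_fix[OF W0[OF c]]) (simp add: mult.assoc)
  also have "\<dots> = q * G q c $ j" using c by (simp add: fps_X_power_mult_nth)
  finally show ?thesis .
qed

lemma gen_nth: "(fps_const u * fps_X ^ m * f) $ n = u * (if n < m then 0 else f $ (n - m))"
  by (simp add: mult.assoc fps_X_power_mult_nth)

lemma gen_Pc: assumes c: "c \<ge> 1" shows "Pc c (fps_const u * fps_X ^ m * G q c)"
proof (rule shift_Pc[OF c, of m _ q], intro allI impI)
  fix n assume "n \<ge> m"
  then have e: "n + c - m = (n - m) + c" by simp
  have "(fps_const u * fps_X ^ m * G q c) $ (n + c) = u * G q c $ ((n - m) + c)"
    by (subst gen_nth) (use \<open>n \<ge> m\<close> e in simp)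
  moreover have "(fps_const u * fps_X ^ m * G q c) $ n = u * G q c $ (n - m)"
    by (subst gen_nth) (use \<open>n \<ge> m\<close> in simp)
  ultimately show "(fps_const u * fps_X ^ m * G q c) $ (n + c) = q * (fps_const u * fps_X ^ m * G q c) $ n"
    by (simp only: G_shift[OF c] mult.left_commute)
qed

lemma G_nth: assumes c: "c \<ge> 1" shows "G q c $ n = (if c dvd n then q ^ (n div c) else 0)"
proof (induction n rule: less_induct)
  case (less n)
  show ?case
  proof (cases "n < c")
    case True
    have "G q c $ n = (1 + fps_const q * (fps_X ^ c * G q c)) $ n"
      by (subst star_fix[OF W0[OF c]]) (simp add: mult.assoc)
    also have "\<dots> = (if n = 0 then 1 else 0)" using True by (simp add: fps_X_power_mult_nth)
    finally have g: "G q c $ n = (if n = 0 then 1 else 0)" .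
    show ?thesis
    proof (cases "n = 0")
      case False
      then have "\<not> c dvd n" using True nat_dvd_not_less by blast
      then show ?thesis using g False by simp
    qed (use g in simp)
  next
    case False
    then obtain j where n: "n = j + c" by (metis le_add_diff_inverse2 not_less)
    have "j < n" using n c by simp
    have "c dvd n \<longleftrightarrow> c dvd j" using n by simp
    moreover have "n div c = Suc (j div c)" using n c by simp
    moreover have "G q c $ n = q * G q c $ j" using G_shift[OF c, of q j] n by simp
    ultimately show ?thesis using less.IH[OF \<open>j < n\<close>] by simp
  qed
qed

lemma P_merge:
  assumes c: "c \<ge> 1" and P: "Pc c S"
  shows "\<exists>F. (\<forall>j<c. ultimately_geometric (F j)) \<and> S = merge_fps c F"
proof (intro exI conjI allI impI)
  define F where "F = (\<lambda>j. Abs_fps (\<lambda>k. S $ (j + k * c)))"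
  show "ultimately_geometric (F j)" if "j < c" for j
    using P that unfolding Pc_def ug_def ultimately_geometric_def F_def by simp
  show "S = merge_fps c F"
    unfolding merge_fps_def F_def by (rule fps_ext) (simp add: mod_div_mult_eq)
qed

context
  fixes ty :: "'a::comm_semiring_1 itself"
  assumes idem: "idempotent_sr ty" and lin: "linearly_ordered_sr ty"
begin

lemma le_total: "nat_le (u::'a) v \<or> nat_le v u"
  using lin unfolding linearly_ordered_sr_def by blast

lemma le_trans': "nat_le (a::'a) b \<Longrightarrow> nat_le b c \<Longrightarrow> nat_le a c"
  unfolding nat_le_def by (metis add.assoc)

lemma le_mult: "nat_le (a::'a) b \<Longrightarrow> nat_le (a * z) (b * z)"
  unfolding nat_le_def by (metis distrib_right)

lemma le_mult2: "nat_le (a::'a) b \<Longrightarrow> nat_le x y \<Longrightarrow> nat_le (a * x) (b * y)"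
  by (metis le_mult le_trans' mult.commute)

lemma le_pow: assumes ab: "nat_le (a::'a) b" shows "nat_le (a ^ i) (b ^ i)"
proof (induction i)
  case 0 show ?case by (simp add: nat_le_def add_idem[OF idem])
next
  case (Suc i) show ?case using le_mult2[OF ab Suc.IH] by simp
qed

lemma ug_add_aux:
  fixes x y :: "nat \<Rightarrow> 'a"
  assumes hx: "\<forall>k\<ge>K. x (Suc k) = a * x k" and hy: "\<forall>k\<ge>K. y (Suc k) = b * y k"
    and ab: "nat_le a b"
  shows "ug (\<lambda>k. x k + y k)"
proof (cases "\<forall>k\<ge>K. nat_le (y k) (x k)")
  case True
  have "\<forall>k\<ge>K. x (Suc k) + y (Suc k) = a * (x k + y k)"
  proof (intro allI impI)
    fix k assume k: "k \<ge> K"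
    have "x (Suc k) + y (Suc k) = x (Suc k)" using True k by (simp add: nat_le_def add.commute)
    moreover have "x k + y k = x k" using True k by (simp add: nat_le_def add.commute)
    ultimately show "x (Suc k) + y (Suc k) = a * (x k + y k)" using hx k by simp
  qed
  then show ?thesis unfolding ug_def by blast
next
  case False
  then obtain k0 where k0: "k0 \<ge> K" "\<not> nat_le (y k0) (x k0)" by blast
  then have xy0: "nat_le (x k0) (y k0)" using le_total by blast
  have dom: "nat_le (x k) (y k)" if "k \<ge> k0" for k
  proof -
    have "x (k0 + (k - k0)) = a ^ (k - k0) * x k0" by (rule ug_pow[OF hx k0(1)])
    moreover have "y (k0 + (k - k0)) = b ^ (k - k0) * y k0" by (rule ug_pow[OF hy k0(1)])
    ultimately show ?thesis using that le_mult2[OF le_pow[OF ab] xy0] by simp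
  qed
  have "\<forall>k\<ge>k0. x (Suc k) + y (Suc k) = b * (x k + y k)"
  proof (intro allI impI)
    fix k assume k: "k \<ge> k0"
    have "x (Suc k) + y (Suc k) = y (Suc k)" using dom[of "Suc k"] k by (simp add: nat_le_def)
    moreover have "x k + y k = y k" using dom k by (simp add: nat_le_def)
    ultimately show "x (Suc k) + y (Suc k) = b * (x k + y k)" using hy k k0 by simp
  qed
  then show ?thesis unfolding ug_def by blast
qed

lemma ug_add:
  fixes x y :: "nat \<Rightarrow> 'a"
  assumes "ug x" "ug y" shows "ug (\<lambda>k. x k + y k)"
proof -
  obtain K1 a where h1: "\<forall>k\<ge>K1. x (Suc k) = a * x k" using assms(1) unfolding ug_def by blast
  obtain K2 b where h2: "\<forall>k\<ge>K2. y (Suc k) = b * y k" using assms(2) unfolding ug_def by blast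
  have hx: "\<forall>k\<ge>max K1 K2. x (Suc k) = a * x k" using h1 by simp
  have hy: "\<forall>k\<ge>max K1 K2. y (Suc k) = b * y k" using h2 by simp
  show ?thesis
  proof (cases "nat_le a b")
    case True then show ?thesis by (rule ug_add_aux[OF hx hy])
  next
    case False
    then have "nat_le b a" using le_total by blast
    then have "ug (\<lambda>k. y k + x k)" by (rule ug_add_aux[OF hy hx])
    then show ?thesis by (simp add: add.commute)
  qed
qed

lemma B_P: "BB (S::'a fps) \<Longrightarrow> \<exists>c\<ge>1. Pc c S"
proof (induction S rule: BB.induct)
  case B0
  have "Pc 1 (0::'a fps)" unfolding Pc_def ug_def by simp
  then show ?case by blast
next
  case (Bgen c u m q) then show ?case using gen_Pc by blast
next
  case (Badd S T)
  then obtain c1 c2 where c: "c1 \<ge> 1" "c2 \<ge> 1" "Pc c1 S" "Pc c2 T" by blast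
  have pS: "Pc (c1 * c2) S" by (rule Pc_mult[OF c(3) c(1)])
  have pT: "Pc (c1 * c2) T" using Pc_mult[OF c(4) c(2), of c1] by (simp add: mult.commute)
  have "Pc (c1 * c2) (S + T)"
    unfolding Pc_def
  proof (intro allI impI)
    fix r assume r: "r < c1 * c2"
    have "ug (\<lambda>k. S $ (r + k * (c1 * c2)))" "ug (\<lambda>k. T $ (r + k * (c1 * c2)))"
      using pS pT r unfolding Pc_def by blast+
    then have "ug (\<lambda>k. S $ (r + k * (c1 * c2)) + T $ (r + k * (c1 * c2)))" by (rule ug_add)
    then show "ug (\<lambda>k. (S + T) $ (r + k * (c1 * c2)))" by simp
  qed
  moreover have "c1 * c2 \<ge> 1" using c by simp
  ultimately show ?case by blast
qed

end



lemma term_eq: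
  assumes c: "c \<ge> 1" and i: "i < c"
  shows "(if m < i then 0 else (if c dvd (m - i) then (q::'b::comm_semiring_1) ^ ((m - i) div c) else 0))
       = (if i = m mod c then q ^ (m div c) else 0)"
proof (cases "i = m mod c")
  case True
  have "i \<le> m" using True by simp
  have e: "m - i = c * (m div c)" using True minus_mod_eq_mult_div[of m c] by simp
  then have "c dvd (m - i)" by simp
  moreover have "(m - i) div c = m div c" using e c by simp
  moreover have "\<not> m < i" using \<open>i \<le> m\<close> by simp
  ultimately show ?thesis using True by (simp only: if_False if_True) simp
next
  case False
  have "\<not> (m \<ge> i \<and> c dvd (m - i))"
  proof
    assume h: "m \<ge> i \<and> c dvd (m - i)"
    then obtain t where t: "m - i = c * t" by blast
    then have "m = i + c * t" using h by simp
    then have "m mod c = i" using i by simp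
    then show False using False by simp
  qed
  then show ?thesis using False by auto
qed

lemma merge_nice:
  fixes S :: "'b::comm_semiring_1 fps"
  assumes c: "c \<ge> 1" and ug: "\<forall>j<c. ultimately_geometric (F j)" and S: "S = merge_fps c F"
  shows "\<exists>(\<kappa>::nat) (P::'b poly) (u::nat \<Rightarrow> 'b) (q::nat \<Rightarrow> 'b).
           (\<forall>n\<ge>\<kappa> * c. coeff P n = 0) \<and>
           S = fps_of_poly P + fps_X ^ (\<kappa> * c) *
                 (\<Sum>i<c. fps_const (u i) * fps_X ^ i * fps_star (fps_const (q i) * fps_X ^ c))"
proof -
  from ug have "\<forall>j<c. \<exists>K \<gamma>. \<forall>k\<ge>K. F j $ (k + 1) = \<gamma> * F j $ k"
    unfolding ultimately_geometric_def .
  then obtain Kf \<gamma>f where h: "\<And>j. j < c \<Longrightarrow> \<forall>k\<ge>Kf j. F j $ (Suc k) = \<gamma>f j * F j $ k"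
    by (metis Suc_eq_plus1)
  define \<kappa> where "\<kappa> = (\<Sum>j<c. Kf j)"
  have Kle: "Kf j \<le> \<kappa>" if "j < c" for j
    unfolding \<kappa>_def by (rule member_le_sum) (use that in auto)
  have geo: "F j $ (\<kappa> + k) = \<gamma>f j ^ k * F j $ \<kappa>" if "j < c" for j k
    using ug_pow[of "Kf j" "\<lambda>k. F j $ k" "\<gamma>f j" \<kappa> k] h[OF that] Kle[OF that] by simp
  define P where "P = Poly (map (\<lambda>n. S $ n) [0..<\<kappa> * c])"
  have coeffP: "coeff P n = (if n < \<kappa> * c then S $ n else 0)" for n
    by (simp add: P_def nth_default_def)
  define u where "u = (\<lambda>i. F i $ \<kappa>)"
  define R where "R = fps_of_poly P + fps_X ^ (\<kappa> * c) *
                 (\<Sum>i<c. fps_const (u i) * fps_X ^ i * fps_star (fps_const (\<gamma>f i) * fps_X ^ c))"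
  have "S = R"
  proof (rule fps_ext)
    fix n
    show "S $ n = R $ n"
    proof (cases "n < \<kappa> * c")
      case True
      then show ?thesis unfolding R_def by (simp add: coeffP fps_X_power_mult_nth)
    next
      case False
      define m where "m = n - \<kappa> * c"
      have n: "n = \<kappa> * c + m" using False m_def by simp
      have "R $ n = (\<Sum>i<c. u i * (if m < i then 0 else G (\<gamma>f i) c $ (m - i)))"
        unfolding R_def using False by (simp add: coeffP fps_X_power_mult_nth fps_sum_nth gen_nth m_def[symmetric])
      also have "\<dots> = (\<Sum>i<c. if i = m mod c then u i * \<gamma>f i ^ (m div c) else 0)"
      proof (rule sum.cong[OF refl])
        fix i assume "i \<in> {..<c}"
        then have i: "i < c" by simp
        show "u i * (if m < i then 0 else G (\<gamma>f i) c $ (m - i)) =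
              (if i = m mod c then u i * \<gamma>f i ^ (m div c) else 0)"
          using term_eq[OF c i, of m "\<gamma>f i"] by (simp add: G_nth[OF c] split: if_splits)
      qed
      also have "\<dots> = u (m mod c) * \<gamma>f (m mod c) ^ (m div c)"
        using c by (subst sum.delta) auto
      finally have r: "R $ n = u (m mod c) * \<gamma>f (m mod c) ^ (m div c)" .
      have "n mod c = m mod c" using n by simp
      moreover have "n div c = \<kappa> + m div c" using n c by simp
      ultimately have "S $ n = F (m mod c) $ (\<kappa> + m div c)"
        using S unfolding merge_fps_def by simp
      also have "\<dots> = \<gamma>f (m mod c) ^ (m div c) * F (m mod c) $ \<kappa>"
        using geo c by simp
      finally show ?thesis using r unfolding u_def by (simp add: mult.commute)
    qed
  qed
  moreover have "\<forall>n\<ge>\<kappa> * c. coeff P n = 0" by (simp add: coeffP)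
  ultimately show ?thesis unfolding R_def by blast
qed

lemma rat_monom: "rational_fps (fps_const (u::'b::comm_semiring_1) * fps_X ^ m)"
proof -
  have "fps_of_poly (monom u m) = fps_const u * fps_X ^ m"
    by (rule fps_ext) (simp add: coeff_monom)
  then show ?thesis using rational_fps.poly[of "monom u m"] by simp
qed

lemma rat_G: "c \<ge> 1 \<Longrightarrow> rational_fps (G (q::'b::comm_semiring_1) c)"
  by (rule rational_fps.star[OF rat_monom W0])

lemma rat_sum: "finite I \<Longrightarrow> (\<And>i. i \<in> I \<Longrightarrow> rational_fps (f i)) \<Longrightarrow> rational_fps (\<Sum>i\<in>I. (f i :: 'b::comm_semiring_1 fps))"
proof (induction I rule: finite_induct)
  case empty then show ?case using rational_fps.poly[of 0] by simp
next
  case (insert x F) then show ?case by (simp add: rational_fps.plus)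
qed

lemma nice_rat:
  assumes "c \<ge> 1"
  shows "rational_fps (fps_of_poly P + fps_X ^ k *
                 (\<Sum>i<c. fps_const (u i) * fps_X ^ i * fps_star (fps_const (q i) * fps_X ^ c)) :: 'b::comm_semiring_1 fps)"
proof -
  have "rational_fps (fps_X ^ k :: 'b fps)" using rat_monom[of 1 k] by simp
  moreover have "rational_fps (\<Sum>i<c. fps_const (u i) * fps_X ^ i * fps_star (fps_const (q i) * fps_X ^ c) :: 'b fps)"
    by (intro rat_sum rational_fps.times rat_monom rat_G assms) simp
  ultimately show ?thesis by (intro rational_fps.plus rational_fps.poly rational_fps.times)
qed


theorem theorem3:
  fixes S :: "'a::comm_semiring_1 fps"
  assumes "idempotent_sr TYPE('a)"
    and "linearly_ordered_sr TYPE('a)"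
    and "archimedian_sr TYPE('a)"
  shows "(rational_fps S \<longleftrightarrow>
           (\<exists>c\<ge>1. \<exists>F. (\<forall>j<c. ultimately_geometric (F j)) \<and> S = merge_fps c F))
       \<and> (rational_fps S \<longleftrightarrow>
           (\<exists>(\<kappa>::nat) (c::nat) (P::'a poly) (u::nat \<Rightarrow> 'a) (q::nat \<Rightarrow> 'a).
              c \<ge> 1 \<and> (\<forall>n\<ge>\<kappa> * c. coeff P n = 0) \<and>
              S = fps_of_poly P + fps_X ^ (\<kappa> * c) *
                    (\<Sum>i<c. fps_const (u i) * fps_X ^ i * fps_star (fps_const (q i) * fps_X ^ c))))"
proof -
  have r2m: "\<exists>c\<ge>1. \<exists>F. (\<forall>j<c. ultimately_geometric (F j)) \<and> S = merge_fps c F"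
    if r: "rational_fps S"
  proof -
    obtain c where c: "c \<ge> 1" "Pc c S" using B_P[OF assms(1) assms(2) rat_B[OF assms(1) r]] by blast
    show ?thesis using P_merge[OF c] c(1) by blast
  qed
  have m2n: "\<exists>(\<kappa>::nat) (c::nat) (P::'a poly) (u::nat \<Rightarrow> 'a) (q::nat \<Rightarrow> 'a).
              c \<ge> 1 \<and> (\<forall>n\<ge>\<kappa> * c. coeff P n = 0) \<and>
              S = fps_of_poly P + fps_X ^ (\<kappa> * c) *
                    (\<Sum>i<c. fps_const (u i) * fps_X ^ i * fps_star (fps_const (q i) * fps_X ^ c))"
    if m: "\<exists>c\<ge>1. \<exists>F. (\<forall>j<c. ultimately_geometric (F j)) \<and> S = merge_fps c F"
  proof -
    obtain c F where c: "c \<ge> 1" "\<forall>j<c. ultimately_geometric (F j)" "S = merge_fps c F" using m by blast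
    show ?thesis using merge_nice[OF c] c(1) by blast
  qed
  have n2r: "rational_fps S"
    if n: "\<exists>(\<kappa>::nat) (c::nat) (P::'a poly) (u::nat \<Rightarrow> 'a) (q::nat \<Rightarrow> 'a).
              c \<ge> 1 \<and> (\<forall>n\<ge>\<kappa> * c. coeff P n = 0) \<and>
              S = fps_of_poly P + fps_X ^ (\<kappa> * c) *
                    (\<Sum>i<c. fps_const (u i) * fps_X ^ i * fps_star (fps_const (q i) * fps_X ^ c))"
  proof -
    obtain \<kappa> c P u q where h: "c \<ge> 1" "S = fps_of_poly P + fps_X ^ (\<kappa> * c) *
                    (\<Sum>i<c. fps_const (u i) * fps_X ^ i * fps_star (fps_const (q i) * fps_X ^ c))"
      using n by blast
    show ?thesis unfolding h(2) by (rule nice_rat[OF h(1)])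
  qed
  show ?thesis using r2m m2n n2r by blast
qed

end
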